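(* Let $\mathbb{X}\subseteq\mathbb{R}^{n_x}$, $\mathbb{U}\subseteq\mathbb{R}^{n_u}$ with $0<\mu_L(\mathbb{U})<\infty$, $T>0$ an integer, $p(x_0)$ an initial density, $p(x_{t+1}\mid x_t,u_t)$ transition densities, and $c_t:\mathbb{X}\times\mathbb{U}\to\mathbb{R}_{\ge0}$, $c_T:\mathbb{X}\to\mathbb{R}_{\ge0}$. For policies $\pi=\{\pi_s\}_{s=0}^{T-1}$ (each $\pi_s(\cdot\mid x)$ a probability density on $\mathbb{U}$) let $p^\pi(\tau)=p(x_0)\prod_{s=0}^{T-1}p(x_{s+1}\mid x_s,u_s)\pi_s(u_s\mid x_s)$, $\tau=(x_{0:T},u_{0:T-1})$, and let $p(\tau\mid\mathcal{O}_{0:T}=1)\propto p(x_0)\prod_{s=0}^{T-1}p(x_{s+1}\mid x_s,u_s)\exp(-c_T(x_T)-\sum_{s=0}^{T-1}c_s(x_s,u_s))$. Fix $t\in\{0,\dots,T-1\}$ and the factors $\pi_s$, $s\ne t$, and let $\eta>-1$, $\eta\ne0$. Then the optimal factor $\pi_t^\bullet:=\arg\min_{\pi_t}D_{1+\eta}(p^\pi\,\|\,p(\cdot\mid\mathcal{O}_{0:T}=1))$, where $\pi_t$ ranges over policies at time $t$, is given by $$\pi_t^\bullet(u_t\mid x_t)=\frac{1}{Z_t(x_t)}\Bigg(\mathbb{E}_{p^\pi(x_{t+1:T},u_{t+1:T-1}\mid x_t,u_t)}\Bigg[\Bigg(\frac{\prod_{s=t+1}^{T-1}\pi_s(u_s\mid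 x_s)}{p(\mathcal{O}_T=1\mid x_T)\prod_{s=t}^{T-1}p(\mathcal{O}_s=1\mid x_s,u_s)}\Bigg)^{\eta}\Bigg]\Bigg)^{-1/\eta},$$ where $Z_t(x_t)$ is the normalizing constant making this a probability density in $u_t$.
   Context: $p(\mathcal{O}_s=1\mid x_s,u_s)=\exp(-c_s(x_s,u_s))$ and $p(\mathcal{O}_T=1\mid x_T)=\exp(-c_T(x_T))$ (optimality variables of control as inference, with uniform control prior on $\mathbb{U}$). The R\'enyi divergence is $D_\alpha(p_1\|p_2)=\frac{1}{\alpha-1}\log\int_{\{p_1p_2>0\}}p_1^\alpha p_2^{1-\alpha}$ for $\alpha>0$, $\alpha\ne1$. $p^\pi(x_{t+1:T},u_{t+1:T-1}\mid x_t,u_t)$ is the conditional density under $p^\pi$. *)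

theory Defs
  imports "HOL-Probability.Probability"
begin

definition elog :: "ennreal \<Rightarrow> ereal" where
  "elog x = (if x = 0 then -\<infinity> else if x = \<infinity> then \<infinity> else ereal (ln (enn2real x)))"

definition renyi_div :: "'a measure \<Rightarrow> real \<Rightarrow> ('a \<Rightarrow> real) \<Rightarrow> ('a \<Rightarrow> real) \<Rightarrow> ereal" where
  "renyi_div M \<alpha> p1 p2 = ereal (1 / (\<alpha> - 1)) *
     elog (\<integral>\<^sup>+ z. indicator {z. p1 z * p2 z > 0} z * ennreal (p1 z powr \<alpha> * p2 z powr (1 - \<alpha>)) \<partial>M)"

definition is_policy :: "'x set \<Rightarrow> 'u set \<Rightarrow> 'x measure \<Rightarrow> 'u measure \<Rightarrow> ('x \<Rightarrow> 'u \<Rightarrow> real) \<Rightarrow> bool" where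
  "is_policy X U MX MU f \<longleftrightarrow>
     (\<lambda>z. f (fst z) (snd z)) \<in> borel_measurable (MX \<Otimes>\<^sub>M MU) \<and>
     (\<forall>x\<in>X. \<forall>u\<in>U. 0 \<le> f x u) \<and>
     (\<forall>x\<in>X. (\<integral>\<^sup>+ u. ennreal (f x u) \<partial>MU) = 1)"

definition traj_space :: "'x measure \<Rightarrow> 'u measure \<Rightarrow> nat \<Rightarrow> ((nat \<Rightarrow> 'x) \<times> (nat \<Rightarrow> 'u)) measure" where
  "traj_space MX MU T = (\<Pi>\<^sub>M s\<in>{0..T}. MX) \<Otimes>\<^sub>M (\<Pi>\<^sub>M s\<in>{0..<T}. MU)"

definition traj_dens :: "('x \<Rightarrow> real) \<Rightarrow> ('x \<Rightarrow> 'u \<Rightarrow> 'x \<Rightarrow> real) \<Rightarrow> nat \<Rightarrow>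
    (nat \<Rightarrow> 'x \<Rightarrow> 'u \<Rightarrow> real) \<Rightarrow> (nat \<Rightarrow> 'x) \<times> (nat \<Rightarrow> 'u) \<Rightarrow> real" where
  "traj_dens p0 P T pol \<tau> =
     p0 (fst \<tau> 0) * (\<Prod>s<T. P (fst \<tau> s) (snd \<tau> s) (fst \<tau> (Suc s)) * pol s (fst \<tau> s) (snd \<tau> s))"

definition post_unnorm :: "('x \<Rightarrow> real) \<Rightarrow> ('x \<Rightarrow> 'u \<Rightarrow> 'x \<Rightarrow> real) \<Rightarrow> nat \<Rightarrow>
    (nat \<Rightarrow> 'x \<Rightarrow> 'u \<Rightarrow> real) \<Rightarrow> ('x \<Rightarrow> real) \<Rightarrow> (nat \<Rightarrow> 'x) \<times> (nat \<Rightarrow> 'u) \<Rightarrow> real" where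
  "post_unnorm p0 P T c cT \<tau> =
     p0 (fst \<tau> 0) * (\<Prod>s<T. P (fst \<tau> s) (snd \<tau> s) (fst \<tau> (Suc s))) *
     exp (- cT (fst \<tau> T) - (\<Sum>s<T. c s (fst \<tau> s) (snd \<tau> s)))"

definition posterior :: "'x measure \<Rightarrow> 'u measure \<Rightarrow> ('x \<Rightarrow> real) \<Rightarrow> ('x \<Rightarrow> 'u \<Rightarrow> 'x \<Rightarrow> real) \<Rightarrow> nat \<Rightarrow>
    (nat \<Rightarrow> 'x \<Rightarrow> 'u \<Rightarrow> real) \<Rightarrow> ('x \<Rightarrow> real) \<Rightarrow> (nat \<Rightarrow> 'x) \<times> (nat \<Rightarrow> 'u) \<Rightarrow> real" where
  "posterior MX MU p0 P T c cT \<tau> =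
     post_unnorm p0 P T c cT \<tau> /
     enn2real (\<integral>\<^sup>+ \<sigma>. ennreal (post_unnorm p0 P T c cT \<sigma>) \<partial>traj_space MX MU T)"

definition suffix_space :: "'x measure \<Rightarrow> 'u measure \<Rightarrow> nat \<Rightarrow> nat \<Rightarrow> ((nat \<Rightarrow> 'x) \<times> (nat \<Rightarrow> 'u)) measure" where
  "suffix_space MX MU T t = (\<Pi>\<^sub>M s\<in>{Suc t..T}. MX) \<Otimes>\<^sub>M (\<Pi>\<^sub>M s\<in>{Suc t..<T}. MU)"

text \<open>Integrand of E_{p^pi(x_{t+1:T},u_{t+1:T-1} | x_t = a, u_t = b)}[ (ratio)^eta ]:
  conditional density of the future times the ratio to the power eta, where
  ratio = prod_{s=t+1}^{T-1} pi_s(u_s|x_s) / (p(O_T=1|x_T) prod_{s=t}^{T-1} p(O_s=1|x_s,u_s)).\<close>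
definition cond_integrand :: "('x \<Rightarrow> 'u \<Rightarrow> 'x \<Rightarrow> real) \<Rightarrow> nat \<Rightarrow> (nat \<Rightarrow> 'x \<Rightarrow> 'u \<Rightarrow> real) \<Rightarrow>
    ('x \<Rightarrow> real) \<Rightarrow> (nat \<Rightarrow> 'x \<Rightarrow> 'u \<Rightarrow> real) \<Rightarrow> real \<Rightarrow> nat \<Rightarrow> 'x \<Rightarrow> 'u \<Rightarrow>
    (nat \<Rightarrow> 'x) \<times> (nat \<Rightarrow> 'u) \<Rightarrow> real" where
  "cond_integrand P T c cT pol \<eta> t a b \<sigma> =
     (let xs = (fst \<sigma>)(t := a); us = (snd \<sigma>)(t := b) in
       ((\<Prod>s\<in>{t..<T}. P (xs s) (us s) (xs (Suc s))) * (\<Prod>s\<in>{Suc t..<T}. pol s (xs s) (us s))) *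
       (((\<Prod>s\<in>{Suc t..<T}. pol s (xs s) (us s)) /
         (exp (- cT (xs T)) * (\<Prod>s\<in>{t..<T}. exp (- c s (xs s) (us s))))) powr \<eta>))"

definition cond_weight :: "'x measure \<Rightarrow> 'u measure \<Rightarrow> ('x \<Rightarrow> 'u \<Rightarrow> 'x \<Rightarrow> real) \<Rightarrow> nat \<Rightarrow>
    (nat \<Rightarrow> 'x \<Rightarrow> 'u \<Rightarrow> real) \<Rightarrow> ('x \<Rightarrow> real) \<Rightarrow> (nat \<Rightarrow> 'x \<Rightarrow> 'u \<Rightarrow> real) \<Rightarrow> real \<Rightarrow> nat \<Rightarrow>
    'x \<Rightarrow> 'u \<Rightarrow> ennreal" where
  "cond_weight MX MU P T c cT pol \<eta> t a b =
     (\<integral>\<^sup>+ \<sigma>. ennreal (cond_integrand P T c cT pol \<eta> t a b \<sigma>) \<partial>suffix_space MX MU T t)"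

definition opt_unnorm :: "'x measure \<Rightarrow> 'u measure \<Rightarrow> ('x \<Rightarrow> 'u \<Rightarrow> 'x \<Rightarrow> real) \<Rightarrow> nat \<Rightarrow>
    (nat \<Rightarrow> 'x \<Rightarrow> 'u \<Rightarrow> real) \<Rightarrow> ('x \<Rightarrow> real) \<Rightarrow> (nat \<Rightarrow> 'x \<Rightarrow> 'u \<Rightarrow> real) \<Rightarrow> real \<Rightarrow> nat \<Rightarrow>
    'x \<Rightarrow> 'u \<Rightarrow> real" where
  "opt_unnorm MX MU P T c cT pol \<eta> t a b =
     enn2real (cond_weight MX MU P T c cT pol \<eta> t a b) powr (- 1 / \<eta>)"

definition opt_normalizer :: "'x measure \<Rightarrow> 'u measure \<Rightarrow> ('x \<Rightarrow> 'u \<Rightarrow> 'x \<Rightarrow> real) \<Rightarrow> nat \<Rightarrow>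
    (nat \<Rightarrow> 'x \<Rightarrow> 'u \<Rightarrow> real) \<Rightarrow> ('x \<Rightarrow> real) \<Rightarrow> (nat \<Rightarrow> 'x \<Rightarrow> 'u \<Rightarrow> real) \<Rightarrow> real \<Rightarrow> nat \<Rightarrow>
    'x \<Rightarrow> ennreal" where
  "opt_normalizer MX MU P T c cT pol \<eta> t a =
     (\<integral>\<^sup>+ b. ennreal (opt_unnorm MX MU P T c cT pol \<eta> t a b) \<partial>MU)"

definition opt_factor :: "'x measure \<Rightarrow> 'u measure \<Rightarrow> ('x \<Rightarrow> 'u \<Rightarrow> 'x \<Rightarrow> real) \<Rightarrow> nat \<Rightarrow>
    (nat \<Rightarrow> 'x \<Rightarrow> 'u \<Rightarrow> real) \<Rightarrow> ('x \<Rightarrow> real) \<Rightarrow> (nat \<Rightarrow> 'x \<Rightarrow> 'u \<Rightarrow> real) \<Rightarrow> real \<Rightarrow> nat \<Rightarrow>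
    'x \<Rightarrow> 'u \<Rightarrow> real" where
  "opt_factor MX MU P T c cT pol \<eta> t a b =
     opt_unnorm MX MU P T c cT pol \<eta> t a b / enn2real (opt_normalizer MX MU P T c cT pol \<eta> t a)"

end

theory Submission
  imports Defs
begin

locale rs =
  fixes X :: "'x::euclidean_space set" and U :: "'u::euclidean_space set"
    and T t :: nat and \<eta> :: real
    and p0 :: "'x \<Rightarrow> real" and P :: "'x \<Rightarrow> 'u \<Rightarrow> 'x \<Rightarrow> real"
    and c :: "nat \<Rightarrow> 'x \<Rightarrow> 'u \<Rightarrow> real" and cT :: "'x \<Rightarrow> real"
    and pol :: "nat \<Rightarrow> 'x \<Rightarrow> 'u \<Rightarrow> real" and MX :: "'x measure" and MU :: "'u measure"
  assumes MX_def: "MX = restrict_space lborel X" and MU_def: "MU = restrict_space lborel U"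
  and X_meas: "X \<in> sets lborel" and U_meas: "U \<in> sets lborel"
    and U_pos: "0 < emeasure lborel U"
    and t_lt: "t < T"
    and p0_meas[measurable]: "p0 \<in> borel_measurable MX"
    and p0_nonneg: "\<forall>x\<in>X. 0 \<le> p0 x"
    and P_meas: "(\<lambda>z. P (fst z) (fst (snd z)) (snd (snd z))) \<in> borel_measurable (MX \<Otimes>\<^sub>M (MU \<Otimes>\<^sub>M MX))"
    and P_nonneg: "\<forall>x\<in>X. \<forall>u\<in>U. \<forall>y\<in>X. 0 \<le> P x u y"
    and c_meas: "\<forall>s<T. (\<lambda>z. c s (fst z) (snd z)) \<in> borel_measurable (MX \<Otimes>\<^sub>M MU)"
    and cT_meas[measurable]: "cT \<in> borel_measurable MX"
    and pol_policy: "\<forall>s<T. s \<noteq> t \<longrightarrow> is_policy X U MX MU (pol s)"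
    and eta_gt: "\<eta> > -1" and eta_ne: "\<eta> \<noteq> 0"
    and W_wd: "\<forall>a\<in>X. \<forall>b\<in>U. 0 < cond_weight MX MU P T c cT pol \<eta> t a b
                             \<and> cond_weight MX MU P T c cT pol \<eta> t a b < \<infinity>"
    and Z_wd: "\<forall>a\<in>X. opt_normalizer MX MU P T c cT pol \<eta> t a < \<infinity>"
begin

lemma t_facts[simp]: "t < T" "Suc t \<le> T" "t \<noteq> T" "T \<noteq> t" "t \<le> T" "\<not> T \<le> t" using t_lt by auto

lemma lt_t[simp]: "s < t \<Longrightarrow> s < T" "s < t \<Longrightarrow> s \<le> T" "s < t \<Longrightarrow> Suc s \<le> T" "s < t \<Longrightarrow> s \<noteq> t"
  using t_lt by (auto simp del: t_facts)

lemma spaceX[simp]: "space MX = X" and spaceU[simp]: "space MU = U"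
  by (simp_all add: MX_def MU_def space_restrict_space)

lemma sfX: "sigma_finite_measure MX"
  unfolding MX_def by (rule sigma_finite_measure_restrict_space[OF _ X_meas]) (rule lborel.sigma_finite_measure_axioms)
lemma sfU: "sigma_finite_measure MU"
  unfolding MU_def by (rule sigma_finite_measure_restrict_space[OF _ U_meas]) (rule lborel.sigma_finite_measure_axioms)

lemma pX: "product_sigma_finite (\<lambda>_::nat. MX)"
  by (simp add: product_sigma_finite_def sfX)
lemma pU: "product_sigma_finite (\<lambda>_::nat. MU)"
  by (simp add: product_sigma_finite_def sfU)

lemma sfPX: "finite I \<Longrightarrow> sigma_finite_measure (PiM I (\<lambda>_::nat. MX))"
  by (rule product_sigma_finite.sigma_finite[OF pX])
lemma sfPU: "finite I \<Longrightarrow> sigma_finite_measure (PiM I (\<lambda>_::nat. MU))"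
  by (rule product_sigma_finite.sigma_finite[OF pU])

lemma P_comp[measurable]: "f \<in> N \<rightarrow>\<^sub>M MX \<Longrightarrow> g \<in> N \<rightarrow>\<^sub>M MU \<Longrightarrow> h \<in> N \<rightarrow>\<^sub>M MX \<Longrightarrow>
   (\<lambda>w. P (f w) (g w) (h w)) \<in> borel_measurable N"
  using measurable_compose[OF _ P_meas, of "\<lambda>w. (f w, g w, h w)" N] by simp

lemma c_comp[measurable]: "s < T \<Longrightarrow> f \<in> N \<rightarrow>\<^sub>M MX \<Longrightarrow> g \<in> N \<rightarrow>\<^sub>M MU \<Longrightarrow>
   (\<lambda>w. c s (f w) (g w)) \<in> borel_measurable N"
  using measurable_compose[OF _ c_meas[rule_format], of "\<lambda>w. (f w, g w)" N s] by simp

lemma pol_comp[measurable]: "s < T \<Longrightarrow> s \<noteq> t \<Longrightarrow> f \<in> N \<rightarrow>\<^sub>M MX \<Longrightarrow> g \<in> N \<rightarrow>\<^sub>M MU \<Longrightarrow>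
   (\<lambda>w. pol s (f w) (g w)) \<in> borel_measurable N"
  using measurable_compose[of "\<lambda>w. (f w, g w)" N "MX \<Otimes>\<^sub>M MU" "\<lambda>z. pol s (fst z) (snd z)"] pol_policy
  by (simp add: is_policy_def)

lemma decomp:
  assumes F: "F \<in> borel_measurable (traj_space MX MU T)"
  shows "(\<integral>\<^sup>+\<tau>. F \<tau> \<partial>traj_space MX MU T) =
    (\<integral>\<^sup>+xp. \<integral>\<^sup>+up. \<integral>\<^sup>+b. \<integral>\<^sup>+\<sigma>.
        F (merge {0..t} {Suc t..T} (xp, fst \<sigma>), merge (insert t {0..<t}) {Suc t..<T} (up(t:=b), snd \<sigma>))
      \<partial>suffix_space MX MU T t \<partial>MU \<partial>PiM {0..<t} (\<lambda>_. MU) \<partial>PiM {0..t} (\<lambda>_. MX))"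
proof -
  have e1: "{0..T} = {0..t} \<union> {Suc t..T}" using t_lt by (auto simp del: t_facts)
  have e2: "{0..<T} = insert t {0..<t} \<union> {Suc t..<T}" using t_lt by (auto simp del: t_facts)
  define PXp where "PXp = PiM {0..t} (\<lambda>_::nat. MX)"
  define PXf where "PXf = PiM {Suc t..T} (\<lambda>_::nat. MX)"
  define PUP where "PUP = PiM (insert t {0..<t}) (\<lambda>_::nat. MU)"
  define PUp where "PUp = PiM {0..<t} (\<lambda>_::nat. MU)"
  define PUf where "PUf = PiM {Suc t..<T} (\<lambda>_::nat. MU)"
  define mx :: "(nat \<Rightarrow> 'x) \<times> (nat \<Rightarrow> 'x) \<Rightarrow> nat \<Rightarrow> 'x" where "mx = merge {0..t} {Suc t..T}"
  define mu :: "(nat \<Rightarrow> 'u) \<times> (nat \<Rightarrow> 'u) \<Rightarrow> nat \<Rightarrow> 'u" where "mu = merge (insert t {0..<t}) {Suc t..<T}"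
  have F'[measurable]: "F \<in> borel_measurable (PiM ({0..t} \<union> {Suc t..T}) (\<lambda>_. MX) \<Otimes>\<^sub>M PiM (insert t {0..<t} \<union> {Suc t..<T}) (\<lambda>_. MU))"
    using F unfolding traj_space_def e1[symmetric] e2[symmetric] .
  have sfPUf: "sigma_finite_measure PUf" unfolding PUf_def by (rule sfPU) simp
  have sfPUP: "sigma_finite_measure PUP" unfolding PUP_def by (rule sfPU) simp
  have sfPXf: "sigma_finite_measure PXf" unfolding PXf_def by (rule sfPX) simp
  have sfPUall: "sigma_finite_measure (PiM (insert t {0..<t} \<union> {Suc t..<T}) (\<lambda>_. MU))" by (rule sfPU) simp
  note [measurable (raw)] = sigma_finite_measure.borel_measurable_nn_integral[OF sfPUf]
  have mmx[measurable]: "mx \<in> PXp \<Otimes>\<^sub>M PXf \<rightarrow>\<^sub>M PiM ({0..t} \<union> {Suc t..T}) (\<lambda>_. MX)"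
    unfolding mx_def PXp_def PXf_def by (rule measurable_merge)
  have mmu[measurable]: "mu \<in> PUP \<Otimes>\<^sub>M PUf \<rightarrow>\<^sub>M PiM (insert t {0..<t} \<union> {Suc t..<T}) (\<lambda>_. MU)"
    unfolding mu_def PUP_def PUf_def by (rule measurable_merge)
  have "(\<integral>\<^sup>+\<tau>. F \<tau> \<partial>traj_space MX MU T) =
     (\<integral>\<^sup>+x. \<integral>\<^sup>+u. F (x, u) \<partial>PiM (insert t {0..<t} \<union> {Suc t..<T}) (\<lambda>_. MU) \<partial>PiM ({0..t} \<union> {Suc t..T}) (\<lambda>_. MX))"
    unfolding traj_space_def e1 e2
    by (rule sigma_finite_measure.nn_integral_fst[OF sfPUall F', symmetric])
  also have "\<dots> = (\<integral>\<^sup>+xp. \<integral>\<^sup>+xf. \<integral>\<^sup>+u. F (mx (xp, xf), u) \<partial>PiM (insert t {0..<t} \<union> {Suc t..<T}) (\<lambda>_. MU) \<partial>PXf \<partial>PXp)"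
    unfolding mx_def PXp_def PXf_def
    by (rule product_sigma_finite.product_nn_integral_fold[OF pX _ _ _ sigma_finite_measure.borel_measurable_nn_integral_fst[OF sfPUall F']]) auto
  also have "\<dots> = (\<integral>\<^sup>+xp. \<integral>\<^sup>+xf. \<integral>\<^sup>+uP. \<integral>\<^sup>+uf. F (mx (xp, xf), mu (uP, uf)) \<partial>PUf \<partial>PUP \<partial>PXf \<partial>PXp)"
  proof (intro nn_integral_cong)
    fix xp xf assume "xp \<in> space PXp" "xf \<in> space PXf"
    then have m: "mx (xp, xf) \<in> space (PiM ({0..t} \<union> {Suc t..T}) (\<lambda>_. MX))"
      using measurable_space[OF mmx] by (simp add: space_pair_measure)
    show "(\<integral>\<^sup>+u. F (mx (xp, xf), u) \<partial>PiM (insert t {0..<t} \<union> {Suc t..<T}) (\<lambda>_. MU)) =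
      (\<integral>\<^sup>+uP. \<integral>\<^sup>+uf. F (mx (xp, xf), mu (uP, uf)) \<partial>PUf \<partial>PUP)"
      unfolding mu_def PUf_def PUP_def
      by (rule product_sigma_finite.product_nn_integral_fold[OF pU _ _ _ measurable_compose_Pair1[OF m F']]) auto
  qed
  also have "\<dots> = (\<integral>\<^sup>+xp. \<integral>\<^sup>+uP. \<integral>\<^sup>+xf. \<integral>\<^sup>+uf. F (mx (xp, xf), mu (uP, uf)) \<partial>PUf \<partial>PXf \<partial>PUP \<partial>PXp)"
  proof (intro nn_integral_cong)
    fix xp assume xp: "xp \<in> space PXp"
    interpret pair_sigma_finite PXf PUP using sfPXf sfPUP by (simp add: pair_sigma_finite_def)
    show "(\<integral>\<^sup>+xf. \<integral>\<^sup>+uP. \<integral>\<^sup>+uf. F (mx (xp, xf), mu (uP, uf)) \<partial>PUf \<partial>PUP \<partial>PXf) =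
          (\<integral>\<^sup>+uP. \<integral>\<^sup>+xf. \<integral>\<^sup>+uf. F (mx (xp, xf), mu (uP, uf)) \<partial>PUf \<partial>PXf \<partial>PUP)"
    proof (rule Fubini'[symmetric])
      have [measurable]: "(\<lambda>z. mx (xp, z)) \<in> PXf \<rightarrow>\<^sub>M PiM ({0..t} \<union> {Suc t..T}) (\<lambda>_. MX)"
        using measurable_Pair2[OF mmx xp] .
      show "(\<lambda>(xf, uP). \<integral>\<^sup>+uf. F (mx (xp, xf), mu (uP, uf)) \<partial>PUf) \<in> borel_measurable (PXf \<Otimes>\<^sub>M PUP)"
        by measurable
    qed
  qed
  also have "\<dots> = (\<integral>\<^sup>+xp. \<integral>\<^sup>+up. \<integral>\<^sup>+b. \<integral>\<^sup>+xf. \<integral>\<^sup>+uf. F (mx (xp, xf), mu (up(t:=b), uf)) \<partial>PUf \<partial>PXf \<partial>MU \<partial>PUp \<partial>PXp)"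
  proof (intro nn_integral_cong)
    fix xp assume xp: "xp \<in> space PXp"
    have [measurable]: "(\<lambda>z. mx (xp, z)) \<in> PXf \<rightarrow>\<^sub>M PiM ({0..t} \<union> {Suc t..T}) (\<lambda>_. MX)"
      using measurable_Pair2[OF mmx xp] .
    note [measurable (raw)] = sigma_finite_measure.borel_measurable_nn_integral[OF sfPXf]
    show "(\<integral>\<^sup>+uP. \<integral>\<^sup>+xf. \<integral>\<^sup>+uf. F (mx (xp, xf), mu (uP, uf)) \<partial>PUf \<partial>PXf \<partial>PUP) =
       (\<integral>\<^sup>+up. \<integral>\<^sup>+b. \<integral>\<^sup>+xf. \<integral>\<^sup>+uf. F (mx (xp, xf), mu (up(t:=b), uf)) \<partial>PUf \<partial>PXf \<partial>MU \<partial>PUp)"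
      unfolding PUP_def PUp_def
      by (rule product_sigma_finite.product_nn_integral_insert[OF pU]) (simp_all add: PUP_def[symmetric])
  qed
  also have "\<dots> = (\<integral>\<^sup>+xp. \<integral>\<^sup>+up. \<integral>\<^sup>+b. \<integral>\<^sup>+\<sigma>. F (mx (xp, fst \<sigma>), mu (up(t:=b), snd \<sigma>)) \<partial>(PXf \<Otimes>\<^sub>M PUf) \<partial>MU \<partial>PUp \<partial>PXp)"
  proof (intro nn_integral_cong)
    fix xp up b assume xp: "xp \<in> space PXp" and up: "up \<in> space PUp" and b: "b \<in> space MU"
    have [measurable]: "(\<lambda>z. mx (xp, z)) \<in> PXf \<rightarrow>\<^sub>M PiM ({0..t} \<union> {Suc t..T}) (\<lambda>_. MX)"
      using measurable_Pair2[OF mmx xp] .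
    have "up(t:=b) \<in> space PUP" using up b unfolding PUp_def PUP_def
      by (auto simp: space_PiM PiE_iff extensional_def)
    then have [measurable]: "(\<lambda>z. mu (up(t:=b), z)) \<in> PUf \<rightarrow>\<^sub>M PiM (insert t {0..<t} \<union> {Suc t..<T}) (\<lambda>_. MU)"
      using measurable_Pair2[OF mmu] by blast
    show "(\<integral>\<^sup>+xf. \<integral>\<^sup>+uf. F (mx (xp, xf), mu (up(t:=b), uf)) \<partial>PUf \<partial>PXf) =
      (\<integral>\<^sup>+\<sigma>. F (mx (xp, fst \<sigma>), mu (up(t:=b), snd \<sigma>)) \<partial>(PXf \<Otimes>\<^sub>M PUf))"
      using sigma_finite_measure.nn_integral_fst[OF sfPUf, of "\<lambda>\<sigma>. F (mx (xp, fst \<sigma>), mu (up(t:=b), snd \<sigma>))" PXf]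
      by simp
  qed
  finally show ?thesis unfolding suffix_space_def PXf_def PUf_def PXp_def PUp_def mx_def mu_def .
qed


lemma sf_suffix: "sigma_finite_measure (suffix_space MX MU T t)"
proof -
  have "pair_sigma_finite (PiM {Suc t..T} (\<lambda>_. MX)) (PiM {Suc t..<T} (\<lambda>_. MU))"
    by (simp add: pair_sigma_finite_def sfPX sfPU)
  then interpret pair_sigma_finite "PiM {Suc t..T} (\<lambda>_. MX)" "PiM {Suc t..<T} (\<lambda>_. MU)" .
  show ?thesis unfolding suffix_space_def by (rule P.sigma_finite_measure_axioms)
qed

definition condx :: "'x \<Rightarrow> 'u \<Rightarrow> (nat \<Rightarrow> 'x) \<Rightarrow> (nat \<Rightarrow> 'u) \<Rightarrow> real" where
 "condx a b x u = P a b (x (Suc t)) * (\<Prod>s\<in>{Suc t..<T}. P (x s) (u s) (x (Suc s))) * (\<Prod>s\<in>{Suc t..<T}. pol s (x s) (u s)) *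
   ((\<Prod>s\<in>{Suc t..<T}. pol s (x s) (u s)) / (exp (- cT (x T)) * (exp (- c t a b) * (\<Prod>s\<in>{Suc t..<T}. exp (- c s (x s) (u s)))))) powr \<eta>"

lemma cond_eq: "cond_integrand P T c cT pol \<eta> t a b \<sigma> = condx a b (fst \<sigma>) (snd \<sigma>)"
proof -
  have e: "{t..<T} = insert t {Suc t..<T}" using t_lt by auto
  have A: "(\<Prod>s\<in>{Suc t..<T}. P (((fst \<sigma>)(t:=a)) s) (((snd \<sigma>)(t:=b)) s) (((fst \<sigma>)(t:=a)) (Suc s))) = (\<Prod>s\<in>{Suc t..<T}. P (fst \<sigma> s) (snd \<sigma> s) (fst \<sigma> (Suc s)))"
    by (rule prod.cong) auto
  have B: "(\<Prod>s\<in>{Suc t..<T}. pol s (((fst \<sigma>)(t:=a)) s) (((snd \<sigma>)(t:=b)) s)) = (\<Prod>s\<in>{Suc t..<T}. pol s (fst \<sigma> s) (snd \<sigma> s))"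
    by (rule prod.cong) auto
  have C: "(\<Prod>s\<in>{Suc t..<T}. exp (- c s (((fst \<sigma>)(t:=a)) s) (((snd \<sigma>)(t:=b)) s))) = (\<Prod>s\<in>{Suc t..<T}. exp (- c s (fst \<sigma> s) (snd \<sigma> s)))"
    by (rule prod.cong) auto
  show ?thesis
    unfolding cond_integrand_def Let_def condx_def e
    by (simp add: prod.insert A B C)
qed

lemma condx_meas[measurable]:
  assumes [measurable]: "a \<in> N \<rightarrow>\<^sub>M MX" "b \<in> N \<rightarrow>\<^sub>M MU"
    "x \<in> N \<rightarrow>\<^sub>M PiM {Suc t..T} (\<lambda>_. MX)" "u \<in> N \<rightarrow>\<^sub>M PiM {Suc t..<T} (\<lambda>_. MU)"
  shows "(\<lambda>w. condx (a w) (b w) (x w) (u w)) \<in> borel_measurable N"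
  unfolding condx_def using t_lt by measurable

abbreviation W where "W \<equiv> cond_weight MX MU P T c cT pol \<eta> t"

lemma W_alt: "W a b = (\<integral>\<^sup>+\<sigma>. ennreal (condx a b (fst \<sigma>) (snd \<sigma>)) \<partial>suffix_space MX MU T t)"
  unfolding cond_weight_def cond_eq ..

lemma W_meas[measurable]: "(\<lambda>z. W (fst z) (snd z)) \<in> borel_measurable (MX \<Otimes>\<^sub>M MU)"
proof -
  note [measurable (raw)] = sigma_finite_measure.borel_measurable_nn_integral[OF sf_suffix]
  have [measurable]: "fst \<in> suffix_space MX MU T t \<rightarrow>\<^sub>M PiM {Suc t..T} (\<lambda>_. MX)"
    "snd \<in> suffix_space MX MU T t \<rightarrow>\<^sub>M PiM {Suc t..<T} (\<lambda>_. MU)"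
    by (simp_all add: suffix_space_def)
  show ?thesis unfolding W_alt by measurable
qed


definition Zp where "Zp = enn2real (\<integral>\<^sup>+\<sigma>. ennreal (post_unnorm p0 P T c cT \<sigma>) \<partial>traj_space MX MU T)"

definition gpre :: "(nat \<Rightarrow> 'x) \<Rightarrow> (nat \<Rightarrow> 'u) \<Rightarrow> real" where
  "gpre x u = p0 (x 0) * (\<Prod>s<t. P (x s) (u s) (x (Suc s)) * pol s (x s) (u s) powr (1+\<eta>) * exp (\<eta> * c s (x s) (u s)))"

definition RI :: "('x \<Rightarrow> 'u \<Rightarrow> real) \<Rightarrow> (nat \<Rightarrow> 'x) \<times> (nat \<Rightarrow> 'u) \<Rightarrow> ennreal" where
  "RI q \<tau> = indicator {z. traj_dens p0 P T (pol(t := q)) z * posterior MX MU p0 P T c cT z > 0} \<tau> *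
     ennreal (traj_dens p0 P T (pol(t := q)) \<tau> powr (1+\<eta>) * posterior MX MU p0 P T c cT \<tau> powr (1 - (1+\<eta>)))"

lemma renyi_RI: "renyi_div (traj_space MX MU T) (1 + \<eta>) (traj_dens p0 P T (pol(t := q))) (posterior MX MU p0 P T c cT)
   = ereal (1/\<eta>) * elog (\<integral>\<^sup>+\<tau>. RI q \<tau> \<partial>traj_space MX MU T)"
  unfolding renyi_div_def RI_def by simp

lemma RI_Z0: "Zp = 0 \<Longrightarrow> RI q \<tau> = 0"
  unfolding RI_def posterior_def Zp_def[symmetric] by simp

lemma prod_split: "(\<Prod>s<T. f s) = (\<Prod>s<t. f s) * f t * (\<Prod>s\<in>{Suc t..<T}. f s)"
proof -
  have "{..<T} = {..<Suc t} \<union> {Suc t..<T}" using t_lt by (auto simp del: t_facts)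
  then show ?thesis by (simp add: prod.union_disjoint ivl_disj_int)
qed

lemma sum_split: "(\<Sum>s<T. f s) = (\<Sum>s<t. f s) + f t + (\<Sum>s\<in>{Suc t..<T}. f s)"
proof -
  have "{..<T} = {..<Suc t} \<union> {Suc t..<T}" using t_lt by (auto simp del: t_facts)
  then show ?thesis by (simp add: sum.union_disjoint ivl_disj_int)
qed

lemma powr_cancel: "(a::real) \<ge> 0 \<Longrightarrow> a powr (1+\<eta>) * a powr (-\<eta>) = a"
  by (simp add: powr_add[symmetric])

lemma ident:
  assumes x: "\<forall>s\<le>T. x s \<in> X" and u: "\<forall>s<T. u s \<in> U" and q: "\<forall>a\<in>X. \<forall>b\<in>U. 0 \<le> q a b"
    and Z: "Zp > 0"
  shows "RI q (x, u) = ennreal (Zp powr \<eta> * (gpre x u * q (x t) (u t) powr (1+\<eta>) * condx (x t) (u t) x u))"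
proof -
  define Q where "Q s = (pol(t:=q)) s (x s) (u s)" for s
  define Pf where "Pf s = P (x s) (u s) (x (Suc s))" for s
  define C where "C s = c s (x s) (u s)" for s
  define A0 where "A0 = p0 (x 0)"
  define CT where "CT = cT (x T)"
  define S where "S = {Suc t..<T}"
  have A0: "A0 \<ge> 0" using x p0_nonneg by (auto simp: A0_def)
  have Pf: "s < T \<Longrightarrow> Pf s \<ge> 0" for s using x u P_nonneg by (auto simp: Pf_def)
  have Q: "s < T \<Longrightarrow> Q s \<ge> 0" for s using x u q pol_policy
    by (cases "s = t") (auto simp: Q_def is_policy_def)
  have p1: "traj_dens p0 P T (pol(t := q)) (x, u) = A0 * (\<Prod>s<T. Pf s) * (\<Prod>s<T. Q s)"
    unfolding traj_dens_def A0_def Pf_def Q_def by (simp add: prod.distrib)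
  have p2: "posterior MX MU p0 P T c cT (x, u) = A0 * (\<Prod>s<T. Pf s) * exp (- CT - (\<Sum>s<T. C s)) / Zp"
    unfolding posterior_def Zp_def[symmetric] unfolding post_unnorm_def A0_def Pf_def CT_def C_def by simp
  define Can where "Can = A0 * (\<Prod>s<T. Pf s) * (\<Prod>s<T. Q s powr (1+\<eta>)) * exp (\<eta> * (CT + (\<Sum>s<T. C s)))"
  have pp: "(\<Prod>s<T. Pf s) \<ge> 0" "(\<Prod>s<T. Q s) \<ge> 0" using Pf Q by (auto intro: prod_nonneg)
  have claim1: "traj_dens p0 P T (pol(t := q)) (x, u) powr (1+\<eta>) * posterior MX MU p0 P T c cT (x, u) powr (1 - (1+\<eta>))
      = Zp powr \<eta> * Can"
  proof -
    have d: "(y / Zp) powr (-\<eta>) = y powr (-\<eta>) * Zp powr \<eta>" for y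
      using Z by (simp add: powr_divide powr_minus_divide)
    have a1: "A0 powr (1+\<eta>) * A0 powr (-\<eta>) = A0" by (rule powr_cancel[OF A0])
    have a2: "(\<Prod>s<T. Pf s) powr (1+\<eta>) * (\<Prod>s<T. Pf s) powr (-\<eta>) = (\<Prod>s<T. Pf s)" by (rule powr_cancel[OF pp(1)])
    have a3: "(\<Prod>s<T. Q s) powr (1+\<eta>) = (\<Prod>s<T. Q s powr (1+\<eta>))" by (rule prod_powr_distrib)
    have a4: "exp (- CT - (\<Sum>s<T. C s)) powr (-\<eta>) = exp (\<eta> * (CT + (\<Sum>s<T. C s)))"
      by (simp add: exp_powr_real algebra_simps)
    have "traj_dens p0 P T (pol(t := q)) (x, u) powr (1+\<eta>) * posterior MX MU p0 P T c cT (x, u) powr (1 - (1+\<eta>))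
      = (A0 powr (1+\<eta>) * (\<Prod>s<T. Pf s) powr (1+\<eta>) * (\<Prod>s<T. Q s) powr (1+\<eta>)) *
        (A0 powr (-\<eta>) * (\<Prod>s<T. Pf s) powr (-\<eta>) * exp (- CT - (\<Sum>s<T. C s)) powr (-\<eta>) * Zp powr \<eta>)"
    proof -
      have e: "1 - (1+\<eta>) = -\<eta>" by simp
      show ?thesis unfolding p1 p2 e by (simp only: d powr_mult)
    qed
    also have "\<dots> = (A0 powr (1+\<eta>) * A0 powr (-\<eta>)) * ((\<Prod>s<T. Pf s) powr (1+\<eta>) * (\<Prod>s<T. Pf s) powr (-\<eta>)) *
        (\<Prod>s<T. Q s) powr (1+\<eta>) * exp (- CT - (\<Sum>s<T. C s)) powr (-\<eta>) * Zp powr \<eta>"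
      by (simp only: ac_simps)
    also have "\<dots> = Zp powr \<eta> * Can"
      unfolding a1 a2 a3 a4 Can_def by (simp only: ac_simps)
    finally show ?thesis .
  qed
  have claim2: "gpre x u * q (x t) (u t) powr (1+\<eta>) * condx (x t) (u t) x u = Can"
  proof -
    have g: "gpre x u = A0 * (\<Prod>s<t. Pf s) * (\<Prod>s<t. Q s powr (1+\<eta>)) * exp (\<eta> * (\<Sum>s<t. C s))"
      unfolding gpre_def A0_def Pf_def Q_def C_def by (simp add: prod.distrib exp_sum sum_distrib_left)
    have qt: "q (x t) (u t) = Q t" by (simp add: Q_def)
    have PS: "(\<Prod>s\<in>S. pol s (x s) (u s)) = (\<Prod>s\<in>S. Q s)"
      unfolding S_def Q_def by (rule prod.cong) auto
    have QS: "(\<Prod>s\<in>S. Q s) \<ge> 0" using Q by (auto simp: S_def intro: prod_nonneg)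
    have D: "exp (- CT) * (exp (- C t) * (\<Prod>s\<in>S. exp (- C s))) = exp (- (CT + C t + (\<Sum>s\<in>S. C s)))"
    proof -
      have "(\<Prod>s\<in>S. exp (- C s)) = exp (- (\<Sum>s\<in>S. C s))"
        by (subst sum_negf[symmetric], subst exp_sum) (simp_all add: S_def)
      then show ?thesis by (simp only: exp_add[symmetric]) (simp add: algebra_simps)
    qed
    have cx: "condx (x t) (u t) x u = Pf t * (\<Prod>s\<in>S. Pf s) * (\<Prod>s\<in>S. Q s powr (1+\<eta>)) * exp (\<eta> * (CT + C t + (\<Sum>s\<in>S. C s)))"
    proof -
      have "condx (x t) (u t) x u = Pf t * (\<Prod>s\<in>S. Pf s) * ((\<Prod>s\<in>S. Q s) * ((\<Prod>s\<in>S. Q s) / exp (- (CT + C t + (\<Sum>s\<in>S. C s)))) powr \<eta>)"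
      proof -
        have "condx (x t) (u t) x u = Pf t * (\<Prod>s\<in>S. Pf s) * (\<Prod>s\<in>S. pol s (x s) (u s)) *
          ((\<Prod>s\<in>S. pol s (x s) (u s)) / (exp (- CT) * (exp (- C t) * (\<Prod>s\<in>S. exp (- C s))))) powr \<eta>"
          by (simp add: condx_def Pf_def C_def CT_def S_def)
        then show ?thesis unfolding PS D by (simp only: ac_simps)
      qed
      also have "\<dots> = Pf t * (\<Prod>s\<in>S. Pf s) * ((\<Prod>s\<in>S. Q s) powr (1+\<eta>) * exp (\<eta> * (CT + C t + (\<Sum>s\<in>S. C s))))"
        using QS by (simp add: powr_divide powr_mult_base exp_powr_real powr_minus field_simps exp_minus mult_exp_exp)
      finally show ?thesis by (simp add: prod_powr_distrib)
    qed
    show ?thesis unfolding g qt cx Can_def prod_split[of Pf] prod_split[of "\<lambda>s. Q s powr (1+\<eta>)"] sum_split[of C]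
      by (simp add: S_def distrib_left exp_add algebra_simps)
  qed
  have pos: "traj_dens p0 P T (pol(t := q)) (x, u) \<ge> 0" "posterior MX MU p0 P T c cT (x, u) \<ge> 0"
    unfolding p1 p2 using A0 pp Z by auto
  show ?thesis
  proof (cases "traj_dens p0 P T (pol(t := q)) (x, u) * posterior MX MU p0 P T c cT (x, u) > 0")
    case True
    then show ?thesis unfolding RI_def claim1 claim2 by simp
  next
    case False
    then have "traj_dens p0 P T (pol(t := q)) (x, u) = 0 \<or> posterior MX MU p0 P T c cT (x, u) = 0"
      using pos False by (metis less_eq_real_def mult_pos_pos)
    then have h: "Zp powr \<eta> * Can = 0" unfolding claim1[symmetric] by auto
    show ?thesis unfolding RI_def claim2 h using False by simp
  qed
qed


lemma condx_meas2[measurable]: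
  assumes [measurable]: "a \<in> N \<rightarrow>\<^sub>M MX" "b \<in> N \<rightarrow>\<^sub>M MU"
    "x \<in> N \<rightarrow>\<^sub>M PiM {0..T} (\<lambda>_. MX)" "u \<in> N \<rightarrow>\<^sub>M PiM {0..<T} (\<lambda>_. MU)"
  shows "(\<lambda>w. condx (a w) (b w) (x w) (u w)) \<in> borel_measurable N"
  unfolding condx_def by measurable

lemma gpre_meas[measurable]:
  assumes [measurable]: "x \<in> N \<rightarrow>\<^sub>M PiM {0..T} (\<lambda>_. MX)" "u \<in> N \<rightarrow>\<^sub>M PiM {0..<T} (\<lambda>_. MU)"
  shows "(\<lambda>w. gpre (x w) (u w)) \<in> borel_measurable N"
  unfolding gpre_def by measurable

lemma gpre_nonneg:
  assumes "\<forall>s\<le>t. x s \<in> X" "\<forall>s<t. u s \<in> U"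
  shows "gpre x u \<ge> 0"
  unfolding gpre_def using assms p0_nonneg P_nonneg
  by (intro mult_nonneg_nonneg prod_nonneg) auto

lemma RI_decomp:
  assumes qpol: "is_policy X U MX MU q" and Z: "Zp > 0"
  shows "(\<integral>\<^sup>+\<tau>. RI q \<tau> \<partial>traj_space MX MU T) =
    (\<integral>\<^sup>+xp. \<integral>\<^sup>+up. \<integral>\<^sup>+b. ennreal (Zp powr \<eta> * gpre xp up * q (xp t) b powr (1+\<eta>)) * W (xp t) b
      \<partial>MU \<partial>PiM {0..<t} (\<lambda>_. MU) \<partial>PiM {0..t} (\<lambda>_. MX))"
proof -
  have q_comp[measurable]: "(\<lambda>w. q (f w) (g w)) \<in> borel_measurable N" if "f \<in> N \<rightarrow>\<^sub>M MX" "g \<in> N \<rightarrow>\<^sub>M MU" for f g N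
    using measurable_compose[of "\<lambda>w. (f w, g w)" N "MX \<Otimes>\<^sub>M MU" "\<lambda>z. q (fst z) (snd z)"] qpol that
    by (simp add: is_policy_def)
  have qn: "\<forall>a\<in>X. \<forall>b\<in>U. 0 \<le> q a b" using qpol by (simp add: is_policy_def)
  define Gf where "Gf \<tau> = ennreal (Zp powr \<eta> * (gpre (fst \<tau>) (snd \<tau>) * q (fst \<tau> t) (snd \<tau> t) powr (1+\<eta>) *
      condx (fst \<tau> t) (snd \<tau> t) (fst \<tau>) (snd \<tau>)))" for \<tau>
  have [measurable]: "fst \<in> traj_space MX MU T \<rightarrow>\<^sub>M PiM {0..T} (\<lambda>_. MX)"
    "snd \<in> traj_space MX MU T \<rightarrow>\<^sub>M PiM {0..<T} (\<lambda>_. MU)"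
    by (simp_all add: traj_space_def)
  have Gm: "Gf \<in> borel_measurable (traj_space MX MU T)"
    unfolding Gf_def by measurable
  have "(\<integral>\<^sup>+\<tau>. RI q \<tau> \<partial>traj_space MX MU T) = (\<integral>\<^sup>+\<tau>. Gf \<tau> \<partial>traj_space MX MU T)"
  proof (rule nn_integral_cong)
    fix \<tau> assume "\<tau> \<in> space (traj_space MX MU T)"
    then obtain x u where \<tau>: "\<tau> = (x, u)" and x: "\<forall>s\<le>T. x s \<in> X" and u: "\<forall>s<T. u s \<in> U"
      by (cases \<tau>) (auto simp: traj_space_def space_pair_measure space_PiM PiE_iff)
    show "RI q \<tau> = Gf \<tau>" unfolding \<tau> Gf_def using ident[OF x u qn Z] by simp
  qed
  also have "\<dots> = (\<integral>\<^sup>+xp. \<integral>\<^sup>+up. \<integral>\<^sup>+b. \<integral>\<^sup>+\<sigma>.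
        Gf (merge {0..t} {Suc t..T} (xp, fst \<sigma>), merge (insert t {0..<t}) {Suc t..<T} (up(t:=b), snd \<sigma>))
      \<partial>suffix_space MX MU T t \<partial>MU \<partial>PiM {0..<t} (\<lambda>_. MU) \<partial>PiM {0..t} (\<lambda>_. MX))"
    by (rule decomp[OF Gm])
  also have "\<dots> = (\<integral>\<^sup>+xp. \<integral>\<^sup>+up. \<integral>\<^sup>+b. ennreal (Zp powr \<eta> * gpre xp up * q (xp t) b powr (1+\<eta>)) * W (xp t) b
      \<partial>MU \<partial>PiM {0..<t} (\<lambda>_. MU) \<partial>PiM {0..t} (\<lambda>_. MX))"
  proof (intro nn_integral_cong)
    fix xp up b assume xp: "xp \<in> space (PiM {0..t} (\<lambda>_. MX))" and up: "up \<in> space (PiM {0..<t} (\<lambda>_. MU))"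
      and b: "b \<in> space MU"
    have xpX: "\<forall>s\<le>t. xp s \<in> X" and upU: "\<forall>s<t. up s \<in> U" and bU: "b \<in> U"
      using xp up b by (auto simp: space_PiM PiE_iff)
    define K where "K = Zp powr \<eta> * gpre xp up * q (xp t) b powr (1+\<eta>)"
    have K: "K \<ge> 0" unfolding K_def using gpre_nonneg[OF xpX upU] by simp
    have [measurable]: "fst \<in> suffix_space MX MU T t \<rightarrow>\<^sub>M PiM {Suc t..T} (\<lambda>_. MX)"
      "snd \<in> suffix_space MX MU T t \<rightarrow>\<^sub>M PiM {Suc t..<T} (\<lambda>_. MU)"
      by (simp_all add: suffix_space_def)
    have "(\<integral>\<^sup>+\<sigma>. Gf (merge {0..t} {Suc t..T} (xp, fst \<sigma>), merge (insert t {0..<t}) {Suc t..<T} (up(t:=b), snd \<sigma>))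
         \<partial>suffix_space MX MU T t) = (\<integral>\<^sup>+\<sigma>. ennreal K * ennreal (condx (xp t) b (fst \<sigma>) (snd \<sigma>)) \<partial>suffix_space MX MU T t)"
    proof (rule nn_integral_cong)
      fix \<sigma>
      let ?mx = "merge {0..t} {Suc t..T} (xp, fst \<sigma>)" and ?mu = "merge (insert t {0..<t}) {Suc t..<T} (up(t:=b), snd \<sigma>)"
      have g: "gpre ?mx ?mu = gpre xp up"
        unfolding gpre_def by (intro arg_cong2[where f="(*)"] prod.cong) (auto simp: merge_def)
      have cx: "condx (xp t) b ?mx ?mu = condx (xp t) b (fst \<sigma>) (snd \<sigma>)"
      proof -
        have A: "(\<Prod>s\<in>{Suc t..<T}. P (?mx s) (?mu s) (?mx (Suc s))) = (\<Prod>s\<in>{Suc t..<T}. P (fst \<sigma> s) (snd \<sigma> s) (fst \<sigma> (Suc s)))"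
          by (rule prod.cong) (auto simp: merge_def)
        have B: "(\<Prod>s\<in>{Suc t..<T}. pol s (?mx s) (?mu s)) = (\<Prod>s\<in>{Suc t..<T}. pol s (fst \<sigma> s) (snd \<sigma> s))"
          by (rule prod.cong) (auto simp: merge_def)
        have C: "(\<Prod>s\<in>{Suc t..<T}. exp (- c s (?mx s) (?mu s))) = (\<Prod>s\<in>{Suc t..<T}. exp (- c s (fst \<sigma> s) (snd \<sigma> s)))"
          by (rule prod.cong) (auto simp: merge_def)
        have D: "?mx (Suc t) = fst \<sigma> (Suc t)" "?mx T = fst \<sigma> T" by (auto simp: merge_def)
        show ?thesis unfolding condx_def A B C D ..
      qed
      have e: "?mx t = xp t" "?mu t = b" by (auto simp: merge_def)
      show "Gf (?mx, ?mu) = ennreal K * ennreal (condx (xp t) b (fst \<sigma>) (snd \<sigma>))"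
      proof -
        have "Gf (?mx, ?mu) = ennreal (K * condx (xp t) b (fst \<sigma>) (snd \<sigma>))"
          unfolding Gf_def fst_conv snd_conv g cx e K_def by (simp add: mult.assoc)
        also have "\<dots> = ennreal K * ennreal (condx (xp t) b (fst \<sigma>) (snd \<sigma>))" by (rule ennreal_mult'[OF K])
        finally show ?thesis .
      qed
    qed
    also have "\<dots> = ennreal K * W (xp t) b"
    proof -
      have [simp]: "xp t \<in> X" "b \<in> U" using xpX bU by auto
      show ?thesis unfolding W_alt by (rule nn_integral_cmult) measurable
    qed
    finally show "(\<integral>\<^sup>+\<sigma>. Gf (merge {0..t} {Suc t..T} (xp, fst \<sigma>), merge (insert t {0..<t}) {Suc t..<T} (up(t:=b), snd \<sigma>))
         \<partial>suffix_space MX MU T t) = ennreal (Zp powr \<eta> * gpre xp up * q (xp t) b powr (1+\<eta>)) * W (xp t) b"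
      unfolding K_def .
  qed
  finally show ?thesis .
qed


lemma tangent_pos:
  fixes x y :: real assumes "x \<ge> 0" "y > 0" "\<eta> > 0"
  shows "(1+\<eta>) * x * y powr \<eta> \<le> x powr (1+\<eta>) + \<eta> * y powr (1+\<eta>)"
proof (cases "x = 0")
  case True then show ?thesis using assms by simp
next
  case False
  then have x: "x > 0" using assms by simp
  have "(x powr (1+\<eta>)) powr (1/(1+\<eta>)) * (y powr (1+\<eta>)) powr (\<eta>/(1+\<eta>))
     \<le> (1/(1+\<eta>)) * x powr (1+\<eta>) + (\<eta>/(1+\<eta>)) * y powr (1+\<eta>)"
    using assms x by (intro Youngs_inequality_0) (auto simp: field_simps)
  moreover have "(x powr (1+\<eta>)) powr (1/(1+\<eta>)) = x" using x assms by (simp add: powr_powr)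
  moreover have "(y powr (1+\<eta>)) powr (\<eta>/(1+\<eta>)) = y powr \<eta>" using assms by (simp add: powr_powr)
  ultimately have "x * y powr \<eta> \<le> (x powr (1+\<eta>) + \<eta> * y powr (1+\<eta>)) / (1+\<eta>)"
    by (simp add: add_divide_distrib)
  then show ?thesis using assms by (simp add: field_simps)
qed

lemma tangent_neg:
  fixes x y :: real assumes "x \<ge> 0" "y > 0" "\<eta> < 0" "\<eta> > -1"
  shows "x powr (1+\<eta>) \<le> (1+\<eta>) * x * y powr \<eta> - \<eta> * y powr (1+\<eta>)"
proof (cases "x = 0")
  case True then show ?thesis using assms by (simp add: mult_nonpos_nonneg)
next
  case False
  then have x: "x > 0" using assms by simp
  have "x powr (1+\<eta>) * y powr (-\<eta>) \<le> (1+\<eta>) * x + (-\<eta>) * y"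
    using assms x by (intro Youngs_inequality_0) auto
  then have "x powr (1+\<eta>) * y powr (-\<eta>) * y powr \<eta> \<le> ((1+\<eta>) * x + (-\<eta>) * y) * y powr \<eta>"
    using assms by (intro mult_right_mono) auto
  moreover have "x powr (1+\<eta>) * y powr (-\<eta>) * y powr \<eta> = x powr (1+\<eta>)"
  proof -
    have "y powr (-\<eta>) * y powr \<eta> = 1" using assms by (simp add: powr_add[symmetric])
    then show ?thesis by (simp add: mult.assoc)
  qed
  moreover have "((1+\<eta>) * x + (-\<eta>) * y) * y powr \<eta> = (1+\<eta>) * x * y powr \<eta> - \<eta> * y powr (1+\<eta>)"
  proof -
    have "y * y powr \<eta> = y powr (1+\<eta>)" using assms by (simp add: powr_mult_base)
    then show ?thesis by (simp add: algebra_simps)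
  qed
  ultimately show ?thesis by linarith
qed

lemma key_ineq:
  fixes x w :: "'u \<Rightarrow> real" and n :: real
  assumes xm[measurable]: "x \<in> borel_measurable MU" and wm[measurable]: "w \<in> borel_measurable MU"
    and x0: "\<forall>b\<in>U. 0 \<le> x b" and w0: "\<forall>b\<in>U. 0 < w b" and n: "n > 0"
    and x1: "(\<integral>\<^sup>+b. ennreal (x b) \<partial>MU) = 1"
    and y1: "(\<integral>\<^sup>+b. ennreal (w b powr (-1/\<eta>) / n) \<partial>MU) = 1"
  shows "\<eta> > 0 \<Longrightarrow> (\<integral>\<^sup>+b. ennreal ((w b powr (-1/\<eta>) / n) powr (1+\<eta>) * w b) \<partial>MU) \<le> (\<integral>\<^sup>+b. ennreal (x b powr (1+\<eta>) * w b) \<partial>MU)"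
    and "\<eta> < 0 \<Longrightarrow> (\<integral>\<^sup>+b. ennreal (x b powr (1+\<eta>) * w b) \<partial>MU) \<le> (\<integral>\<^sup>+b. ennreal ((w b powr (-1/\<eta>) / n) powr (1+\<eta>) * w b) \<partial>MU)"
proof -
  define y where "y b = w b powr (-1/\<eta>) / n" for b
  define k where "k = 1 / n powr \<eta>"
  have k: "k > 0" using n by (simp add: k_def)
  have ypos: "b \<in> U \<Longrightarrow> y b > 0" for b
  proof -
    assume "b \<in> U" then have "w b > 0" using w0 by auto
    then show ?thesis using n by (simp add: y_def)
  qed
  have yk: "b \<in> U \<Longrightarrow> y b powr \<eta> * w b = k" for b
  proof -
    assume b: "b \<in> U"
    have "y b powr \<eta> = (w b powr (-1/\<eta>)) powr \<eta> / n powr \<eta>" by (simp add: y_def powr_divide)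
    also have "(w b powr (-1/\<eta>)) powr \<eta> = w b powr (-1)" using eta_ne by (simp add: powr_powr)
    also have "w b powr (-1) = 1 / w b" using w0 b by (simp add: powr_minus_divide less_imp_le)
    finally have "y b powr \<eta> = 1 / w b / n powr \<eta>" .
    moreover have "w b > 0" using w0 b by auto
    ultimately show ?thesis using n by (simp add: k_def)
  qed
  have yak: "b \<in> U \<Longrightarrow> y b powr (1+\<eta>) * w b = k * y b" for b
  proof -
    assume b: "b \<in> U"
    have "y b powr (1+\<eta>) = y b * y b powr \<eta>" using ypos[OF b] by (simp add: powr_mult_base)
    then show ?thesis using yk[OF b] by (simp add: algebra_simps)
  qed
  have ym[measurable]: "y \<in> borel_measurable MU" unfolding y_def by measurable
  have Iy: "(\<integral>\<^sup>+b. ennreal (y b powr (1+\<eta>) * w b) \<partial>MU) = ennreal k"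
  proof -
    have "(\<integral>\<^sup>+b. ennreal (y b powr (1+\<eta>) * w b) \<partial>MU) = (\<integral>\<^sup>+b. ennreal k * ennreal (y b) \<partial>MU)"
      using yak k by (intro nn_integral_cong) (simp add: ennreal_mult')
    also have "\<dots> = ennreal k" using y1 by (simp add: nn_integral_cmult y_def)
    finally show ?thesis .
  qed
  have intlin: "(\<integral>\<^sup>+b. ennreal (r1 * x b + r2 * y b) \<partial>MU) = ennreal r1 + ennreal r2" if "r1 \<ge> 0" "r2 \<ge> 0" for r1 r2
  proof -
    have "(\<integral>\<^sup>+b. ennreal (r1 * x b + r2 * y b) \<partial>MU) = (\<integral>\<^sup>+b. ennreal r1 * ennreal (x b) + ennreal r2 * ennreal (y b) \<partial>MU)"
      using that x0 ypos by (intro nn_integral_cong) (simp add: ennreal_mult' less_imp_le ennreal_plus[symmetric])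
    also have "\<dots> = ennreal r1 * (\<integral>\<^sup>+b. ennreal (x b) \<partial>MU) + ennreal r2 * (\<integral>\<^sup>+b. ennreal (y b) \<partial>MU)"
      by (simp add: nn_integral_add nn_integral_cmult)
    also have "\<dots> = ennreal r1 + ennreal r2" using x1 y1 by (simp add: y_def)
    finally show ?thesis .
  qed
  show "\<eta> > 0 \<Longrightarrow> (\<integral>\<^sup>+b. ennreal ((w b powr (-1/\<eta>) / n) powr (1+\<eta>) * w b) \<partial>MU) \<le> (\<integral>\<^sup>+b. ennreal (x b powr (1+\<eta>) * w b) \<partial>MU)"
  proof -
    assume ep: "\<eta> > 0"
    have pt: "(1+\<eta>) * k * x b \<le> x b powr (1+\<eta>) * w b + \<eta> * k * y b" if b: "b \<in> U" for b
    proof -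
      have "(1+\<eta>) * x b * y b powr \<eta> * w b \<le> (x b powr (1+\<eta>) + \<eta> * y b powr (1+\<eta>)) * w b"
        using tangent_pos[OF x0[rule_format, OF b] ypos[OF b] ep] w0 b by (intro mult_right_mono) auto
      moreover have "(1+\<eta>) * x b * y b powr \<eta> * w b = (1+\<eta>) * x b * (y b powr \<eta> * w b)" by (simp add: mult.assoc)
      moreover have "(x b powr (1+\<eta>) + \<eta> * y b powr (1+\<eta>)) * w b = x b powr (1+\<eta>) * w b + \<eta> * (y b powr (1+\<eta>) * w b)"
        by (simp add: algebra_simps)
      ultimately have "(1+\<eta>) * x b * k \<le> x b powr (1+\<eta>) * w b + \<eta> * (k * y b)"
        unfolding yk[OF b] yak[OF b] by simp
      then show ?thesis by (simp add: algebra_simps)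
    qed
    have "ennreal ((1+\<eta>) * k) = (\<integral>\<^sup>+b. ennreal ((1+\<eta>) * k * x b + 0 * y b) \<partial>MU)"
      using intlin[of "(1+\<eta>) * k" 0] ep k by simp
    also have "\<dots> \<le> (\<integral>\<^sup>+b. ennreal (x b powr (1+\<eta>) * w b) + ennreal (\<eta> * k * y b) \<partial>MU)"
    proof (intro nn_integral_mono)
      fix b assume "b \<in> space MU"
      then have b: "b \<in> U" by simp
      have "0 \<le> x b powr (1+\<eta>) * w b" using w0 b by (simp add: less_imp_le)
      moreover have "0 \<le> \<eta> * k * y b" using ep k ypos[OF b] by simp
      ultimately have "ennreal (x b powr (1+\<eta>) * w b) + ennreal (\<eta> * k * y b) = ennreal (x b powr (1+\<eta>) * w b + \<eta> * k * y b)"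
        by (simp add: ennreal_plus)
      then show "ennreal ((1+\<eta>) * k * x b + 0 * y b) \<le> ennreal (x b powr (1+\<eta>) * w b) + ennreal (\<eta> * k * y b)"
        using pt[OF b] by (simp add: ennreal_leI)
    qed
    also have "\<dots> = (\<integral>\<^sup>+b. ennreal (x b powr (1+\<eta>) * w b) \<partial>MU) + ennreal (\<eta> * k)"
      using intlin[of 0 "\<eta> * k"] ep k by (simp add: nn_integral_add)
    finally have "ennreal k + ennreal (\<eta> * k) \<le> (\<integral>\<^sup>+b. ennreal (x b powr (1+\<eta>) * w b) \<partial>MU) + ennreal (\<eta> * k)"
      using ep k by (simp add: distrib_right ennreal_plus[symmetric] del: ennreal_plus)
    then have "ennreal k \<le> (\<integral>\<^sup>+b. ennreal (x b powr (1+\<eta>) * w b) \<partial>MU)"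
      by (simp add: add.commute[of _ "ennreal (\<eta> * k)"])
    then show ?thesis using Iy by (simp add: y_def)
  qed
  show "\<eta> < 0 \<Longrightarrow> (\<integral>\<^sup>+b. ennreal (x b powr (1+\<eta>) * w b) \<partial>MU) \<le> (\<integral>\<^sup>+b. ennreal ((w b powr (-1/\<eta>) / n) powr (1+\<eta>) * w b) \<partial>MU)"
  proof -
    assume en: "\<eta> < 0"
    have pt: "x b powr (1+\<eta>) * w b \<le> (1+\<eta>) * k * x b + (-\<eta> * k) * y b" if b: "b \<in> U" for b
    proof -
      have "x b powr (1+\<eta>) * w b \<le> ((1+\<eta>) * x b * y b powr \<eta> - \<eta> * y b powr (1+\<eta>)) * w b"
        using tangent_neg[OF x0[rule_format, OF b] ypos[OF b] en eta_gt] w0 b by (intro mult_right_mono) auto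
      moreover have "((1+\<eta>) * x b * y b powr \<eta> - \<eta> * y b powr (1+\<eta>)) * w b = (1+\<eta>) * x b * (y b powr \<eta> * w b) - \<eta> * (y b powr (1+\<eta>) * w b)"
        by (simp add: algebra_simps)
      ultimately have "x b powr (1+\<eta>) * w b \<le> (1+\<eta>) * x b * k - \<eta> * (k * y b)"
        unfolding yk[OF b] yak[OF b] by simp
      then show ?thesis by (simp add: algebra_simps)
    qed
    have "(\<integral>\<^sup>+b. ennreal (x b powr (1+\<eta>) * w b) \<partial>MU) \<le> (\<integral>\<^sup>+b. ennreal ((1+\<eta>) * k * x b + (-\<eta> * k) * y b) \<partial>MU)"
      using pt by (intro nn_integral_mono) (simp add: ennreal_leI)
    also have "\<dots> = ennreal ((1+\<eta>) * k) + ennreal (-\<eta> * k)"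
      using en eta_gt k by (intro intlin) (auto simp: mult_nonpos_nonneg)
    also have "\<dots> = ennreal ((1+\<eta>) * k + -\<eta> * k)"
      using en eta_gt k by (intro ennreal_plus[symmetric]) (auto simp: mult_nonpos_nonneg)
    also have "\<dots> = ennreal k" by (simp add: algebra_simps)
    finally show ?thesis using Iy by (simp add: y_def)
  qed
qed


lemma elog_mono: "x \<le> y \<Longrightarrow> elog x \<le> elog y"
proof -
  assume xy: "x \<le> y"
  show ?thesis
  proof (cases "x = 0 \<or> y = \<infinity>")
    case True then show ?thesis by (auto simp: elog_def)
  next
    case False
    then have x0: "x \<noteq> 0" and yi: "y \<noteq> \<infinity>" by auto
    have y0: "y \<noteq> 0" using x0 xy by (metis le_zero_eq)
    have xi: "x \<noteq> \<infinity>" using yi xy by (metis infinity_ennreal_def top_unique)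
    have "enn2real x > 0" using x0 xi by (simp add: enn2real_positive_iff less_top zero_less_iff_neq_zero)
    moreover have "enn2real x \<le> enn2real y" using xy yi by (intro enn2real_mono) (auto simp: less_top)
    ultimately show ?thesis using x0 y0 xi yi by (simp add: elog_def)
  qed
qed

lemma ereal_cmp_pos: "(e::real) > 0 \<Longrightarrow> a \<le> b \<Longrightarrow> ereal (1/e) * a \<le> ereal (1/e) * b"
  by (rule ereal_mult_left_mono) auto

lemma ereal_cmp_neg: "(e::real) < 0 \<Longrightarrow> b \<le> a \<Longrightarrow> ereal (1/e) * a \<le> ereal (1/e) * b"
proof -
  assume e: "e < 0" and ba: "b \<le> a"
  have "ereal (-1/e) * b \<le> ereal (-1/e) * a" using e ba by (intro ereal_mult_left_mono) (auto simp: divide_simps)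
  moreover have "ereal (1/e) * z = - (ereal (-1/e) * z)" for z
    by (cases z) (auto simp: divide_simps)
  ultimately show ?thesis by simp
qed


abbreviation Nz where "Nz \<equiv> opt_normalizer MX MU P T c cT pol \<eta> t"
abbreviation qopt where "qopt \<equiv> opt_factor MX MU P T c cT pol \<eta> t"
abbreviation ou where "ou \<equiv> opt_unnorm MX MU P T c cT pol \<eta> t"

definition w where "w a b = enn2real (W a b)"

lemma W_fin: "a \<in> X \<Longrightarrow> b \<in> U \<Longrightarrow> W a b = ennreal (w a b) \<and> w a b > 0"
  using W_wd unfolding w_def
  by (auto simp: enn2real_positive_iff less_top)

lemma w_meas[measurable]: "(\<lambda>z. w (fst z) (snd z)) \<in> borel_measurable (MX \<Otimes>\<^sub>M MU)"
  unfolding w_def by measurable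

lemma ou_eq: "ou a b = w a b powr (-1/\<eta>)"
  unfolding opt_unnorm_def w_def ..

lemma ou_meas[measurable]: "(\<lambda>z. ou (fst z) (snd z)) \<in> borel_measurable (MX \<Otimes>\<^sub>M MU)"
  unfolding ou_eq by measurable

lemma Nz_meas[measurable]: "Nz \<in> borel_measurable MX"
proof -
  note [measurable (raw)] = sigma_finite_measure.borel_measurable_nn_integral[OF sfU]
  show ?thesis unfolding opt_normalizer_def[abs_def] by measurable
qed

lemma Nz_pos: assumes a: "a \<in> X" shows "0 < Nz a"
proof (rule ccontr)
  assume "\<not> 0 < Nz a"
  then have "Nz a = 0" by (simp add: zero_less_iff_neq_zero)
  moreover have m: "(\<lambda>b. ennreal (ou a b)) \<in> borel_measurable MU"
    using measurable_compose_Pair1[OF _ ou_meas, of a] a by simp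
  ultimately have "AE b in MU. ennreal (ou a b) = 0"
    unfolding opt_normalizer_def using nn_integral_0_iff_AE[OF m] by simp
  moreover have "\<forall>b\<in>space MU. ennreal (ou a b) \<noteq> 0"
    using W_fin[OF a] by (auto simp: ou_eq) fastforce
  ultimately have "AE b in MU. False" by (auto elim!: AE_mp)
  then have "emeasure MU (space MU) = 0" using AE_iff_measurable[of "space MU" MU "\<lambda>_. False"] sets.top[of MU] by simp
  moreover have "emeasure MU (space MU) = emeasure lborel U"
    unfolding MU_def using U_meas by (simp add: emeasure_restrict_space space_restrict_space)
  ultimately show False using U_pos by simp
qed

lemma Nz_eq: "a \<in> X \<Longrightarrow> Nz a = ennreal (enn2real (Nz a)) \<and> enn2real (Nz a) > 0"
  using Nz_pos Z_wd by (auto simp: enn2real_positive_iff less_top)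

lemma qopt_eq: "qopt a b = w a b powr (-1/\<eta>) / enn2real (Nz a)"
  unfolding opt_factor_def ou_eq ..

lemma opt_policy: "is_policy X U MX MU qopt"
  unfolding is_policy_def
proof (intro conjI ballI)
  show "(\<lambda>z. qopt (fst z) (snd z)) \<in> borel_measurable (MX \<Otimes>\<^sub>M MU)"
    unfolding opt_factor_def by measurable
next
  fix a b assume "a \<in> X" "b \<in> U"
  show "0 \<le> qopt a b" unfolding qopt_eq by simp
next
  fix a assume a: "a \<in> X"
  define n where "n = enn2real (Nz a)"
  have n: "n > 0" "Nz a = ennreal n" using Nz_eq[OF a] by (auto simp: n_def)
  have m: "(\<lambda>b. ennreal (ou a b)) \<in> borel_measurable MU"
    using measurable_compose_Pair1[OF _ ou_meas, of a] a by simp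
  have "(\<integral>\<^sup>+b. ennreal (qopt a b) \<partial>MU) = (\<integral>\<^sup>+b. ennreal (ou a b) * ennreal (1/n) \<partial>MU)"
    unfolding opt_factor_def n_def[symmetric] using n
    by (intro nn_integral_cong) (simp add: ennreal_mult[symmetric] opt_unnorm_def)
  also have "\<dots> = Nz a * ennreal (1/n)"
    by (simp add: nn_integral_multc[OF m] opt_normalizer_def)
  also have "\<dots> = 1" using n by (simp add: ennreal_mult[symmetric])
  finally show "(\<integral>\<^sup>+b. ennreal (qopt a b) \<partial>MU) = 1" .
qed

lemma inner_eq:
  assumes a: "a \<in> X" and K: "K \<ge> 0" and qpol: "is_policy X U MX MU q"
  shows "(\<integral>\<^sup>+b. ennreal (K * q a b powr (1+\<eta>)) * W a b \<partial>MU) =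
         ennreal K * (\<integral>\<^sup>+b. ennreal (q a b powr (1+\<eta>) * w a b) \<partial>MU)"
proof -
  have qm: "(\<lambda>b. q a b) \<in> borel_measurable MU"
    using measurable_compose_Pair1[of a MX "\<lambda>z. q (fst z) (snd z)" MU] a qpol by (simp add: is_policy_def)
  have wm: "(\<lambda>b. w a b) \<in> borel_measurable MU"
    using measurable_compose_Pair1[OF _ w_meas, of a] a by simp
  have "(\<integral>\<^sup>+b. ennreal (K * q a b powr (1+\<eta>)) * W a b \<partial>MU) =
        (\<integral>\<^sup>+b. ennreal K * ennreal (q a b powr (1+\<eta>) * w a b) \<partial>MU)"
    using W_fin[OF a] K by (intro nn_integral_cong) (simp add: ennreal_mult[symmetric] less_imp_le mult.assoc)
  also have "\<dots> = ennreal K * (\<integral>\<^sup>+b. ennreal (q a b powr (1+\<eta>) * w a b) \<partial>MU)"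
    using qm wm by (intro nn_integral_cmult) measurable
  finally show ?thesis .
qed


lemma main_ineq:
  assumes ppol: "is_policy X U MX MU \<pi>"
  shows "renyi_div (traj_space MX MU T) (1 + \<eta>) (traj_dens p0 P T (pol(t := qopt))) (posterior MX MU p0 P T c cT)
       \<le> renyi_div (traj_space MX MU T) (1 + \<eta>) (traj_dens p0 P T (pol(t := \<pi>))) (posterior MX MU p0 P T c cT)"
proof (cases "Zp = 0")
  case True
  have "RI q = (\<lambda>_. 0)" for q using RI_Z0[OF True] by (intro ext) simp
  then show ?thesis unfolding renyi_RI by simp
next
  case False
  have "Zp \<ge> 0" by (simp add: Zp_def)
  then have Z: "Zp > 0" using False by simp
  define I where "I q = (\<integral>\<^sup>+xp. \<integral>\<^sup>+up. \<integral>\<^sup>+b. ennreal (Zp powr \<eta> * gpre xp up * q (xp t) b powr (1+\<eta>)) * W (xp t) b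
      \<partial>MU \<partial>PiM {0..<t} (\<lambda>_. MU) \<partial>PiM {0..t} (\<lambda>_. MX))" for q
  have cmp: "(\<eta> > 0 \<longrightarrow> I qopt \<le> I \<pi>) \<and> (\<eta> < 0 \<longrightarrow> I \<pi> \<le> I qopt)"
  proof -
    have inner: "(\<eta> > 0 \<longrightarrow> J qopt \<le> J \<pi>) \<and> (\<eta> < 0 \<longrightarrow> J \<pi> \<le> J qopt)"
      if xp: "xp \<in> space (PiM {0..t} (\<lambda>_. MX))" and up: "up \<in> space (PiM {0..<t} (\<lambda>_. MU))"
      and J_def: "J = (\<lambda>q. \<integral>\<^sup>+b. ennreal (Zp powr \<eta> * gpre xp up * q (xp t) b powr (1+\<eta>)) * W (xp t) b \<partial>MU)"
      for xp up J
    proof -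
      have xpX: "\<forall>s\<le>t. xp s \<in> X" and upU: "\<forall>s<t. up s \<in> U"
        using xp up by (auto simp: space_PiM PiE_iff)
      define a where "a = xp t"
      have a: "a \<in> X" using xpX by (simp add: a_def)
      define K where "K = Zp powr \<eta> * gpre xp up"
      have K: "K \<ge> 0" unfolding K_def using gpre_nonneg[OF xpX upU] by simp
      have J: "J q = ennreal K * (\<integral>\<^sup>+b. ennreal (q a b powr (1+\<eta>) * w a b) \<partial>MU)" if "is_policy X U MX MU q" for q
        unfolding J_def K_def[symmetric] a_def[symmetric] by (rule inner_eq[OF a K that])
      define n where "n = enn2real (Nz a)"
      have n: "n > 0" using Nz_eq[OF a] by (simp add: n_def)
      have pm: "(\<lambda>b. \<pi> a b) \<in> borel_measurable MU"
        using measurable_compose_Pair1[of a MX "\<lambda>z. \<pi> (fst z) (snd z)" MU] a ppol by (simp add: is_policy_def)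
      have wm: "(\<lambda>b. w a b) \<in> borel_measurable MU"
        using measurable_compose_Pair1[OF _ w_meas, of a] a by simp
      have p0': "\<forall>b\<in>U. 0 \<le> \<pi> a b" and p1: "(\<integral>\<^sup>+b. ennreal (\<pi> a b) \<partial>MU) = 1"
        using ppol a by (auto simp: is_policy_def)
      have y1: "(\<integral>\<^sup>+b. ennreal (w a b powr (-1/\<eta>) / n) \<partial>MU) = 1"
        using opt_policy a unfolding is_policy_def qopt_eq n_def by auto
      have w0: "\<forall>b\<in>U. 0 < w a b" using W_fin[OF a] by auto
      note ki = key_ineq[OF pm wm p0' w0 n p1 y1]
      have qo: "qopt a b = w a b powr (-1/\<eta>) / n" for b unfolding qopt_eq n_def ..
      show ?thesis
        unfolding J[OF opt_policy] J[OF ppol] qo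
      proof (intro conjI impI)
        assume "\<eta> > 0"
        from mult_left_mono[OF ki(1)[OF this], of "ennreal K"]
        show "ennreal K * (\<integral>\<^sup>+b. ennreal ((w a b powr (-1/\<eta>) / n) powr (1+\<eta>) * w a b) \<partial>MU)
          \<le> ennreal K * (\<integral>\<^sup>+b. ennreal (\<pi> a b powr (1+\<eta>) * w a b) \<partial>MU)" by simp
      next
        assume "\<eta> < 0"
        from mult_left_mono[OF ki(2)[OF this], of "ennreal K"]
        show "ennreal K * (\<integral>\<^sup>+b. ennreal (\<pi> a b powr (1+\<eta>) * w a b) \<partial>MU)
          \<le> ennreal K * (\<integral>\<^sup>+b. ennreal ((w a b powr (-1/\<eta>) / n) powr (1+\<eta>) * w a b) \<partial>MU)" by simp
      qed
    qed
    show ?thesis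
    proof (intro conjI impI)
      assume "\<eta> > 0"
      then show "I qopt \<le> I \<pi>" unfolding I_def
        apply (rule_tac nn_integral_mono)
        apply (rule_tac nn_integral_mono)
        using inner by blast
    next
      assume "\<eta> < 0"
      then show "I \<pi> \<le> I qopt" unfolding I_def
        apply (rule_tac nn_integral_mono)
        apply (rule_tac nn_integral_mono)
        using inner by blast
    qed
  qed
  have eqs: "(\<integral>\<^sup>+\<tau>. RI q \<tau> \<partial>traj_space MX MU T) = I q" if "is_policy X U MX MU q" for q
    unfolding I_def by (rule RI_decomp[OF that Z])
  show ?thesis
    unfolding renyi_RI eqs[OF opt_policy] eqs[OF ppol]
  proof (cases "\<eta> > 0")
    case True
    then show "ereal (1/\<eta>) * elog (I qopt) \<le> ereal (1/\<eta>) * elog (I \<pi>)"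
      using cmp by (intro ereal_cmp_pos elog_mono) auto
  next
    case False
    then have "\<eta> < 0" using eta_ne by simp
    then show "ereal (1/\<eta>) * elog (I qopt) \<le> ereal (1/\<eta>) * elog (I \<pi>)"
      using cmp by (intro ereal_cmp_neg elog_mono) auto
  qed
qed

end

theorem proposition3:
  fixes X :: "'x::euclidean_space set" and U :: "'u::euclidean_space set"
    and T t :: nat and \<eta> :: real
    and p0 :: "'x \<Rightarrow> real" and P :: "'x \<Rightarrow> 'u \<Rightarrow> 'x \<Rightarrow> real"
    and c :: "nat \<Rightarrow> 'x \<Rightarrow> 'u \<Rightarrow> real" and cT :: "'x \<Rightarrow> real"
    and pol :: "nat \<Rightarrow> 'x \<Rightarrow> 'u \<Rightarrow> real"
  defines "MX \<equiv> restrict_space lborel X" and "MU \<equiv> restrict_space lborel U"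
  assumes X_meas: "X \<in> sets lborel" and U_meas: "U \<in> sets lborel"
    and U_pos: "0 < emeasure lborel U" and U_fin: "emeasure lborel U < \<infinity>"
    and T_pos: "0 < T" and t_lt: "t < T"
    and p0_meas: "p0 \<in> borel_measurable MX"
    and p0_nonneg: "\<forall>x\<in>X. 0 \<le> p0 x"
    and p0_dens: "(\<integral>\<^sup>+ x. ennreal (p0 x) \<partial>MX) = 1"
    and P_meas: "(\<lambda>z. P (fst z) (fst (snd z)) (snd (snd z))) \<in> borel_measurable (MX \<Otimes>\<^sub>M (MU \<Otimes>\<^sub>M MX))"
    and P_nonneg: "\<forall>x\<in>X. \<forall>u\<in>U. \<forall>y\<in>X. 0 \<le> P x u y"
    and P_dens: "\<forall>x\<in>X. \<forall>u\<in>U. (\<integral>\<^sup>+ y. ennreal (P x u y) \<partial>MX) = 1"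
    and c_meas: "\<forall>s<T. (\<lambda>z. c s (fst z) (snd z)) \<in> borel_measurable (MX \<Otimes>\<^sub>M MU)"
    and c_nonneg: "\<forall>s<T. \<forall>x\<in>X. \<forall>u\<in>U. 0 \<le> c s x u"
    and cT_meas: "cT \<in> borel_measurable MX"
    and cT_nonneg: "\<forall>x\<in>X. 0 \<le> cT x"
    and pol_policy: "\<forall>s<T. s \<noteq> t \<longrightarrow> is_policy X U MX MU (pol s)"
    and eta_gt: "\<eta> > -1" and eta_ne: "\<eta> \<noteq> 0"
    and W_wd: "\<forall>a\<in>X. \<forall>b\<in>U. 0 < cond_weight MX MU P T c cT pol \<eta> t a b
                             \<and> cond_weight MX MU P T c cT pol \<eta> t a b < \<infinity>"
    and Z_wd: "\<forall>a\<in>X. opt_normalizer MX MU P T c cT pol \<eta> t a < \<infinity>"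
  shows "is_policy X U MX MU (opt_factor MX MU P T c cT pol \<eta> t) \<and>
         (\<forall>\<pi>. is_policy X U MX MU \<pi> \<longrightarrow>
            renyi_div (traj_space MX MU T) (1 + \<eta>)
               (traj_dens p0 P T (pol(t := opt_factor MX MU P T c cT pol \<eta> t)))
               (posterior MX MU p0 P T c cT)
            \<le> renyi_div (traj_space MX MU T) (1 + \<eta>)
               (traj_dens p0 P T (pol(t := \<pi>)))
               (posterior MX MU p0 P T c cT))"
proof -
  interpret rs X U T t \<eta> p0 P c cT pol MX MU
    apply unfold_locales
    using X_meas U_meas U_pos t_lt p0_meas p0_nonneg P_meas P_nonneg c_meas cT_meas pol_policy eta_gt eta_ne W_wd Z_wd
    by (simp_all add: MX_def MU_def)
  show ?thesis using opt_policy main_ineq by blast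
qed

end
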